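(* Let $G$ be a directed acyclic graph on $[n]$ and $H\subseteq G$ a subgraph. Then $Q_H$ is a face of $\tilde Q_G$ if and only if $H$ is path consistent and admissible with respect to $G$.
   Context: Conventions: $G$ is a directed acyclic graph with vertex set $[n]$, every edge $(i,j)\in E(G)$ satisfying $i<j$. A subgraph $H\subseteq G$ means $V(H)=[n]$ and $E(H)\subseteq E(G)$; $H^{un}$ is the underlying undirected graph. $Q_H=\mathrm{conv}\{\mathbf e_i-\mathbf e_j:(i,j)\in E(H)\}$, $\tilde Q_G=\mathrm{conv}(\{\mathbf 0\}\cup\{\mathbf e_i-\mathbf e_j:(i,j)\in E(G)\})$ in $\mathbb R^n$. Path consistency: for an undirected path $p$ in $H^{un}$ from $u$ to $v$, let $\delta(p)$ be the number of edges traversed (from $u$ to $v$) along their orientation minus the number traversed against it. $H$ is path consistent if any two undirected paths in $H^{un}$ with the same endpoints $u,v$ have equal $\delta$; this common value is $\ell_{uv}$. Within a connected component $C$ of $H^{un}$, a weight source is a vertex $u_*\in C$ such that $\ell_{u_*v_*}=\max_{u,v\in C}\ell_{uv}$ for some $v_*\in C$. The weight function $w:[n]\to\mathbb Z$ is $w(i)=\ell_{u_*i}$ where $u_*$ is any weight source in the component of $i$ (independent of the choice). $H_{comp}$: directed multigraph whose vertices are the connected components of $H^{un}$, with one edge from the component of $u$ to the component of $v$ for each $(u,v)\in E(G)\setminus E(H)$. For such an edge $e$ corresponding to $(u,v)$, the weight decrease is $\mathsf{wd}(e)=w(u)-w(v)$. Admissibility: a path consistent $H$ is admissible with respect to $G$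 if for every directed cycle $\mathcal C$ of $H_{comp}$ (including loops, which are cycles of length 1), $\sum_{e\in\mathcal C}\mathsf{wd}(e)>-|\mathcal C|$, where $|\mathcal C|$ is the number of edges of $\mathcal C$. *)

theory Defs
  imports "HOL-Analysis.Analysis"
begin

text \<open>Vertices are the elements of a finite linearly ordered type 'n (standing for [n]);
  a directed graph is given by its edge set E :: ('n \<times> 'n) set; the vertex set is always all of 'n.
  Vectors in R^n are elements of real^'n, and e_i is axis i 1.\<close>

definition dag_on :: "('n::{finite,linorder} \<times> 'n) set \<Rightarrow> bool" where
  "dag_on G \<longleftrightarrow> (\<forall>(i,j)\<in>G. i < j)"

definition Q_poly :: "('n::{finite,linorder} \<times> 'n) set \<Rightarrow> (real^('n::{finite,linorder})) set" where
  "Q_poly H = convex hull {axis i 1 - axis j 1 | i j. (i,j) \<in> H}"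

definition Q_tilde :: "('n::{finite,linorder} \<times> 'n) set \<Rightarrow> (real^('n::{finite,linorder})) set" where
  "Q_tilde G = convex hull (insert 0 {axis i 1 - axis j 1 | i j. (i,j) \<in> G})"

definition uadj :: "('n \<times> 'n) set \<Rightarrow> 'n \<Rightarrow> 'n \<Rightarrow> bool" where
  "uadj E a b \<longleftrightarrow> (a,b) \<in> E \<or> (b,a) \<in> E"

definition upath :: "('n \<times> 'n) set \<Rightarrow> 'n list \<Rightarrow> bool" where
  "upath E ps \<longleftrightarrow> ps \<noteq> [] \<and> distinct ps \<and>
     (\<forall>i. Suc i < length ps \<longrightarrow> uadj E (ps ! i) (ps ! Suc i))"

definition delta :: "('n \<times> 'n) set \<Rightarrow> 'n list \<Rightarrow> int" where
  "delta E ps = (\<Sum>i<length ps - 1. (if (ps ! i, ps ! Suc i) \<in> E then 1 else -1))"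

definition path_consistent :: "('n \<times> 'n) set \<Rightarrow> bool" where
  "path_consistent E \<longleftrightarrow> (\<forall>ps qs. upath E ps \<and> upath E qs \<and> hd ps = hd qs \<and> last ps = last qs
      \<longrightarrow> delta E ps = delta E qs)"

definition ell :: "('n \<times> 'n) set \<Rightarrow> 'n \<Rightarrow> 'n \<Rightarrow> int" where
  "ell E u v = delta E (SOME ps. upath E ps \<and> hd ps = u \<and> last ps = v)"

definition comp :: "('n \<times> 'n) set \<Rightarrow> 'n \<Rightarrow> 'n set" where
  "comp E u = {v. \<exists>ps. upath E ps \<and> hd ps = u \<and> last ps = v}"

definition weight_source :: "('n \<times> 'n) set \<Rightarrow> 'n \<Rightarrow> bool" where
  "weight_source E u \<longleftrightarrow> (\<exists>v \<in> comp E u. \<forall>a \<in> comp E u. \<forall>b \<in> comp E u. ell E a b \<le> ell E u v)"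

definition weight :: "('n \<times> 'n) set \<Rightarrow> 'n \<Rightarrow> int" where
  "weight E i = ell E (SOME u. u \<in> comp E i \<and> weight_source E u) i"

text \<open>A directed cycle of H_comp of length k \<ge> 1 is a list of edges of G - H whose successive
  components chain up cyclically, with pairwise distinct (source) components.\<close>
definition comp_cycle :: "('n \<times> 'n) set \<Rightarrow> ('n \<times> 'n) set \<Rightarrow> ('n \<times> 'n) list \<Rightarrow> bool" where
  "comp_cycle G H cyc \<longleftrightarrow> cyc \<noteq> [] \<and> set cyc \<subseteq> G - H \<and>
     distinct (map (\<lambda>e. comp H (fst e)) cyc) \<and>
     (\<forall>i < length cyc. comp H (snd (cyc ! i)) = comp H (fst (cyc ! ((Suc i) mod length cyc))))"

definition admissible :: "('n \<times> 'n) set \<Rightarrow> ('n \<times> 'n) set \<Rightarrow> bool" where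
  "admissible G H \<longleftrightarrow> (\<forall>cyc. comp_cycle G H cyc \<longrightarrow>
     (\<Sum>e\<leftarrow>cyc. weight H (fst e) - weight H (snd e)) > - int (length cyc))"

end

theory Submission
  imports Defs
begin


definition wk :: "('n \<times> 'n) set \<Rightarrow> 'n list \<Rightarrow> bool" where
  "wk E ps \<longleftrightarrow> ps \<noteq> [] \<and> (\<forall>i. Suc i < length ps \<longrightarrow> uadj E (ps ! i) (ps ! Suc i))"

lemma upath_wk: "upath E ps \<longleftrightarrow> wk E ps \<and> distinct ps"
  unfolding upath_def wk_def by auto

lemma wk_single[simp]: "wk E [a]"
  unfolding wk_def by auto

lemma wk_Nil[simp]: "\<not> wk E []"
  unfolding wk_def by auto

lemma wk_Cons2[simp]: "wk E (a#b#ps) \<longleftrightarrow> uadj E a b \<and> wk E (b#ps)"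
proof
  assume "wk E (a#b#ps)"
  then have h: "\<And>i. Suc i < length (a#b#ps) \<Longrightarrow> uadj E ((a#b#ps) ! i) ((a#b#ps) ! Suc i)"
    unfolding wk_def by blast
  have "uadj E a b" using h[of 0] by simp
  moreover have "wk E (b#ps)" unfolding wk_def
  proof (intro conjI allI impI)
    fix i assume "Suc i < length (b#ps)"
    then show "uadj E ((b#ps) ! i) ((b#ps) ! Suc i)" using h[of "Suc i"] by simp
  qed simp
  ultimately show "uadj E a b \<and> wk E (b#ps)" by blast
next
  assume "uadj E a b \<and> wk E (b#ps)"
  then have u: "uadj E a b" and h: "\<And>i. Suc i < length (b#ps) \<Longrightarrow> uadj E ((b#ps) ! i) ((b#ps) ! Suc i)"
    unfolding wk_def by blast+
  show "wk E (a#b#ps)" unfolding wk_def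
  proof (intro conjI allI impI)
    fix i assume i: "Suc i < length (a#b#ps)"
    show "uadj E ((a#b#ps) ! i) ((a#b#ps) ! Suc i)"
    proof (cases i)
      case 0 then show ?thesis using u by simp
    next
      case (Suc j) then show ?thesis using h[of j] i by simp
    qed
  qed simp
qed

lemma wk_append: "wk E (xs @ y # zs) \<longleftrightarrow> wk E (xs @ [y]) \<and> wk E (y # zs)"
proof (induction xs)
  case Nil then show ?case by simp
next
  case (Cons a xs)
  then show ?case by (cases xs) auto
qed

lemma uadj_sym: "uadj E a b \<Longrightarrow> uadj E b a"
  unfolding uadj_def by auto

lemma wk_rev: "wk E ps \<Longrightarrow> wk E (rev ps)"
proof (induction ps rule: rev_induct)
  case Nil then show ?case by simp
next
  case (snoc x xs)
  show ?case
  proof (cases xs rule: rev_cases)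
    case Nil then show ?thesis by simp
  next
    case (snoc ys y)
    have "wk E (ys @ [y] @ [x])" using snoc.prems snoc by simp
    then have w1: "wk E (ys@[y])" and w2: "uadj E y x"
      using wk_append[of E ys y "[x]"] by auto
    have "wk E (rev (ys@[y]))" using snoc.IH w1 snoc by simp
    then show ?thesis using snoc w2 uadj_sym by auto
  qed
qed

lemma wk_shorten: "wk E ps \<Longrightarrow> \<exists>qs. upath E qs \<and> hd qs = hd ps \<and> last qs = last ps"
proof (induction "length ps" arbitrary: ps rule: less_induct)
  case less
  show ?case
  proof (cases "distinct ps")
    case True then show ?thesis using less.prems upath_wk by blast
  next
    case False
    then obtain xs ys zs y where ps: "ps = xs@[y]@ys@[y]@zs" using not_distinct_decomp by blast
    have ps1: "ps = xs @ y # (ys@[y]@zs)" using ps by simp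
    have ps2: "ps = (xs@[y]@ys) @ y # zs" using ps by simp
    have "wk E (xs@[y])" using less.prems wk_append[of E xs y "ys@[y]@zs"] unfolding ps1[symmetric] by blast
    moreover have "wk E (y#zs)" using less.prems wk_append[of E "xs@[y]@ys" y zs] unfolding ps2[symmetric] by blast
    ultimately have w: "wk E (xs@y#zs)" using wk_append[of E xs y zs] by blast
    have "length (xs@y#zs) < length ps" using ps by simp
    then have "\<exists>qs. upath E qs \<and> hd qs = hd (xs@y#zs) \<and> last qs = last (xs@y#zs)"
      using less.hyps w by blast
    then obtain qs where q: "upath E qs" "hd qs = hd (xs@y#zs)" "last qs = last (xs@y#zs)" by blast
    have "hd (xs@y#zs) = hd ps" unfolding ps by (cases xs) simp_all
    moreover have "last (xs@y#zs) = last ps" unfolding ps by (cases zs) simp_all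
    ultimately show ?thesis using q by auto
  qed
qed

definition conn :: "('n \<times> 'n) set \<Rightarrow> 'n \<Rightarrow> 'n \<Rightarrow> bool" where
  "conn E u v \<longleftrightarrow> (\<exists>ps. wk E ps \<and> hd ps = u \<and> last ps = v)"

lemma conn_iff_path: "conn E u v \<longleftrightarrow> (\<exists>ps. upath E ps \<and> hd ps = u \<and> last ps = v)"
  unfolding conn_def
proof
  assume "\<exists>ps. wk E ps \<and> hd ps = u \<and> last ps = v"
  then obtain ps where "wk E ps" "hd ps = u" "last ps = v" by blast
  then show "\<exists>ps. upath E ps \<and> hd ps = u \<and> last ps = v" using wk_shorten[of E ps] by auto
next
  assume "\<exists>ps. upath E ps \<and> hd ps = u \<and> last ps = v"
  then show "\<exists>ps. wk E ps \<and> hd ps = u \<and> last ps = v" unfolding upath_wk by blast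
qed

lemma comp_conn: "comp E u = {v. conn E u v}"
  unfolding comp_def conn_iff_path by simp

lemma conn_refl: "conn E u u"
  unfolding conn_def by (rule exI[of _ "[u]"]) simp

lemma conn_sym: "conn E u v \<Longrightarrow> conn E v u"
  unfolding conn_def using wk_rev by (metis hd_rev last_rev)

lemma conn_trans: "conn E u v \<Longrightarrow> conn E v w \<Longrightarrow> conn E u w"
proof -
  assume "conn E u v" "conn E v w"
  then obtain p q where p: "wk E p" "hd p = u" "last p = v" and q: "wk E q" "hd q = v" "last q = w"
    unfolding conn_def by blast
  obtain xs where xs: "p = xs @ [v]" using p by (metis append_butlast_last_id wk_Nil)
  obtain zs where zs: "q = v # zs" using q by (metis list.collapse wk_Nil)
  have "wk E (xs @ [v])" using p(1) xs by simp
  moreover have "wk E (v # zs)" using q(1) zs by simp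
  ultimately have "wk E (xs @ v # zs)" using wk_append[of E xs v zs] by blast
  moreover have "hd (xs @ v # zs) = u" using p xs by (cases xs) auto
  moreover have "last (xs @ v # zs) = w" using q zs by (cases zs) auto
  ultimately show ?thesis unfolding conn_def by blast
qed

lemma comp_eq:
  assumes uv: "conn E u v" shows "comp E u = comp E v"
proof -
  have vu: "conn E v u" using uv by (rule conn_sym)
  show ?thesis unfolding comp_conn
  proof (rule set_eqI, rule iffI)
    fix x assume "x \<in> {x. conn E u x}"
    then have "conn E u x" by simp
    then have "conn E v x" by (rule conn_trans[OF vu])
    then show "x \<in> {x. conn E v x}" by simp
  next
    fix x assume "x \<in> {x. conn E v x}"
    then have "conn E v x" by simp
    then have "conn E u x" by (rule conn_trans[OF uv])
    then show "x \<in> {x. conn E u x}" by simp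
  qed
qed

lemma uadj_conn: "uadj E a b \<Longrightarrow> conn E a b"
  unfolding conn_def by (rule exI[of _ "[a,b]"]) simp

lemma delta_single[simp]: "delta E [a] = 0"
  unfolding delta_def by simp

lemma delta_Cons2[simp]: "delta E (a#b#ps) = (if (a,b) \<in> E then 1 else -1) + delta E (b#ps)"
  unfolding delta_def by (simp add: sum.lessThan_Suc_shift del: sum.lessThan_Suc)

lemma delta_append: "delta E (xs @ y # zs) = delta E (xs @ [y]) + delta E (y # zs)"
proof (induction xs)
  case Nil then show ?case by simp
next
  case (Cons a xs)
  then show ?case by (cases xs) auto
qed




definition feas :: "('n \<times> 'n) set \<Rightarrow> ('n \<times> 'n) set \<Rightarrow> bool" where
  "feas G H \<longleftrightarrow> (\<exists>c::'n \<Rightarrow> real. (\<forall>(a,b)\<in>H. c a - c b = 1) \<and> (\<forall>(a,b)\<in>G-H. c a - c b < 1))"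

lemma ell_path:
  assumes pc: "path_consistent H" and p: "upath H ps" "hd ps = u" "last ps = v"
  shows "ell H u v = delta H ps"
proof -
  have ex: "\<exists>ps. upath H ps \<and> hd ps = u \<and> last ps = v" using p by blast
  let ?q = "SOME ps. upath H ps \<and> hd ps = u \<and> last ps = v"
  have "upath H ?q \<and> hd ?q = u \<and> last ?q = v" using someI_ex[OF ex] .
  then have "delta H ?q = delta H ps" using pc p unfolding path_consistent_def by blast
  then show ?thesis unfolding ell_def by simp
qed

lemma ws_exists:
  fixes H :: "('n::finite \<times> 'n) set"
  assumes pc: "path_consistent H"
  shows "\<exists>u. u \<in> comp H i \<and> weight_source H u"
proof -
  let ?C = "comp H i"
  have iC: "i \<in> ?C" unfolding comp_conn using conn_refl by auto
  let ?S = "?C \<times> ?C"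
  have fin: "finite ((\<lambda>(a,b). ell H a b) ` ?S)" by simp
  have ne: "(\<lambda>(a,b). ell H a b) ` ?S \<noteq> {}" using iC by blast
  obtain p where pS: "p \<in> ?S" and pm: "(\<lambda>(a,b). ell H a b) p = Max ((\<lambda>(a,b). ell H a b) ` ?S)"
    using Max_in[OF fin ne] by auto
  obtain a b where ab: "p = (a,b)" by force
  have aC: "a \<in> ?C" and bC: "b \<in> ?C" using pS ab by auto
  have "conn H i a" using aC unfolding comp_conn by simp
  then have ca: "comp H a = ?C" using comp_eq[of H i a] by simp
  have "\<forall>x \<in> comp H a. \<forall>y \<in> comp H a. ell H x y \<le> ell H a b"
  proof (intro ballI)
    fix x y assume "x \<in> comp H a" "y \<in> comp H a"
    then have "(x,y) \<in> ?S" using ca by auto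
    then have "(\<lambda>(a,b). ell H a b) (x,y) \<in> (\<lambda>(a,b). ell H a b) ` ?S" by (rule imageI)
    then have "(\<lambda>(a,b). ell H a b) (x,y) \<le> Max ((\<lambda>(a,b). ell H a b) ` ?S)" using fin by (rule Max_ge[rotated])
    then have "ell H x y \<le> Max ((\<lambda>(a,b). ell H a b) ` ?S)" by simp
    then show "ell H x y \<le> ell H a b" using pm ab by simp
  qed
  then have "weight_source H a" unfolding weight_source_def using bC ca by blast
  then show ?thesis using aC by blast
qed

definition src :: "('n \<times> 'n) set \<Rightarrow> 'n \<Rightarrow> 'n" where
  "src H i = (SOME u. u \<in> comp H i \<and> weight_source H u)"

lemma weight_src: "weight H i = ell H (src H i) i"
  unfolding weight_def src_def by simp

lemma src_comp: "comp H i = comp H j \<Longrightarrow> src H i = src H j"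
  unfolding src_def by simp

lemma src_conn:
  fixes H :: "('n::finite \<times> 'n) set"
  assumes pc: "path_consistent H"
  shows "conn H (src H i) i"
proof -
  have "src H i \<in> comp H i" unfolding src_def using someI_ex[OF ws_exists[OF pc]] by blast
  then have "conn H i (src H i)" unfolding comp_conn by simp
  then show ?thesis by (rule conn_sym)
qed

lemma weight_path:
  fixes H :: "('n::finite \<times> 'n) set"
  assumes pc: "path_consistent H" and p: "upath H ps" "hd ps = src H i" "last ps = i"
  shows "weight H i = delta H ps"
  unfolding weight_src by (rule ell_path[OF pc p])

lemma delta_pot:
  assumes c: "\<forall>(a,b)\<in>H. c a - c b = (1::real)" and w: "wk H ps"
  shows "real_of_int (delta H ps) = c (hd ps) - c (last ps)"
  using w
proof (induction ps)
  case Nil then show ?case by simp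
next
  case (Cons a ps)
  show ?case
  proof (cases ps)
    case Nil then show ?thesis by simp
  next
    case (Cons b qs)
    have u: "uadj H a b" and w: "wk H (b#qs)" using Cons.prems Cons by auto
    have ih: "real_of_int (delta H (b#qs)) = c b - c (last (b#qs))" using Cons.IH w Cons by simp
    have "real_of_int (if (a,b) \<in> H then 1 else -1) = c a - c b"
      using u c unfolding uadj_def by auto
    then show ?thesis using ih Cons by simp
  qed
qed

lemma feas_pc:
  assumes "feas G H" shows "path_consistent H"
proof -
  obtain c :: "'a \<Rightarrow> real" where c1: "\<forall>(a,b)\<in>H. c a - c b = 1"
    using assms unfolding feas_def by blast
  show ?thesis unfolding path_consistent_def
  proof (intro allI impI)
    fix ps qs assume h: "upath H ps \<and> upath H qs \<and> hd ps = hd qs \<and> last ps = last qs"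
    have "wk H ps" "wk H qs" using h upath_wk by blast+
    then have "real_of_int (delta H ps) = c (hd ps) - c (last ps)"
      "real_of_int (delta H qs) = c (hd qs) - c (last qs)" using delta_pot[OF c1] by blast+
    then have "real_of_int (delta H ps) = real_of_int (delta H qs)" using h by simp
    then show "delta H ps = delta H qs" by (rule of_int_eq_iff[THEN iffD1])
  qed
qed

lemma feas_weight:
  fixes H :: "('n::finite \<times> 'n) set"
  assumes c: "\<forall>(a,b)\<in>H. c a - c b = (1::real)" and pc: "path_consistent H"
  shows "real_of_int (weight H i) = c (src H i) - c i"
proof -
  have "\<exists>ps. upath H ps \<and> hd ps = src H i \<and> last ps = i"
    using src_conn[OF pc] unfolding conn_iff_path .
  then obtain ps where p: "upath H ps" "hd ps = src H i" "last ps = i" by blast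
  have w: "weight H i = delta H ps" by (rule weight_path[OF pc p])
  have "wk H ps" using p(1) upath_wk by blast
  then have "real_of_int (delta H ps) = c (hd ps) - c (last ps)" by (rule delta_pot[OF c])
  then show ?thesis using w p by simp
qed

lemma sum_list_nth: "sum_list (map f xs) = (\<Sum>i<length xs. f (xs!i))"
  by (simp add: sum_list_sum_nth atLeast0LessThan)

lemma cyc_tele: "(\<Sum>i<m. g (Suc i mod m)) = (\<Sum>i<m. (g i :: real))"
proof (cases m)
  case 0 then show ?thesis by simp
next
  case (Suc n)
  have "(\<Sum>i<Suc n. g (Suc i mod Suc n)) = (\<Sum>i<n. g (Suc i mod Suc n)) + g 0" by simp
  also have "(\<Sum>i<n. g (Suc i mod Suc n)) = (\<Sum>i<n. g (Suc i))" by (rule sum.cong) auto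
  also have "(\<Sum>i<n. g (Suc i)) + g 0 = (\<Sum>i<Suc n. g i)"
    by (simp add: sum.lessThan_Suc_shift del: sum.lessThan_Suc)
  finally show ?thesis using Suc by simp
qed

lemma feas_adm:
  fixes G H :: "('n::finite \<times> 'n) set"
  assumes f: "feas G H"
  shows "admissible G H"
  unfolding admissible_def
proof (intro allI impI)
  fix cyc assume cc: "comp_cycle G H cyc"
  obtain c :: "'n \<Rightarrow> real" where c1: "\<forall>(a,b)\<in>H. c a - c b = 1" and c2: "\<forall>(a,b)\<in>G-H. c a - c b < 1"
    using f unfolding feas_def by blast
  have pc: "path_consistent H" using feas_pc[OF f] .
  let ?m = "length cyc"
  have m0: "?m > 0" using cc unfolding comp_cycle_def by simp
  let ?g = "\<lambda>i. c (src H (fst (cyc!i)))"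
  have sn: "src H (snd (cyc!i)) = src H (fst (cyc!(Suc i mod ?m)))" if "i < ?m" for i
  proof -
    have "comp H (snd (cyc!i)) = comp H (fst (cyc!(Suc i mod ?m)))"
      using cc that unfolding comp_cycle_def by blast
    then show ?thesis by (rule src_comp)
  qed
  have "real_of_int (\<Sum>e\<leftarrow>cyc. weight H (fst e) - weight H (snd e))
      = (\<Sum>i<?m. real_of_int (weight H (fst (cyc!i))) - real_of_int (weight H (snd (cyc!i))))"
    by (simp add: sum_list_nth)
  also have "\<dots> = (\<Sum>i<?m. (?g i - ?g (Suc i mod ?m)) + (c (snd (cyc!i)) - c (fst (cyc!i))))"
    by (rule sum.cong) (auto simp: feas_weight[OF c1 pc] sn)
  also have "\<dots> = (\<Sum>i<?m. ?g i) - (\<Sum>i<?m. ?g (Suc i mod ?m)) + (\<Sum>i<?m. c (snd (cyc!i)) - c (fst (cyc!i)))"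
    by (simp add: sum.distrib sum_subtractf)
  also have "\<dots> = (\<Sum>i<?m. c (snd (cyc!i)) - c (fst (cyc!i)))"
    using cyc_tele[of ?g ?m] by simp
  also have "\<dots> > (\<Sum>i<?m. (-1::real))"
  proof (rule sum_strict_mono)
    show "finite {..<?m}" by simp
    show "{..<?m} \<noteq> {}" using m0 by auto
    fix i assume "i \<in> {..<?m}"
    then have "cyc!i \<in> set cyc" by simp
    then have "cyc!i \<in> G - H" using cc unfolding comp_cycle_def by blast
    then have "c (fst (cyc!i)) - c (snd (cyc!i)) < 1" using c2 by (cases "cyc!i") auto
    then show "-1 < c (snd (cyc!i)) - c (fst (cyc!i))" by simp
  qed
  finally have "real_of_int (- int ?m) < real_of_int (\<Sum>e\<leftarrow>cyc. weight H (fst e) - weight H (snd e))"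
    by simp
  then show "(\<Sum>e\<leftarrow>cyc. weight H (fst e) - weight H (snd e)) > - int ?m" by linarith
qed




fun vp :: "('e \<Rightarrow> 'c) \<Rightarrow> ('e \<Rightarrow> 'c) \<Rightarrow> 'e set \<Rightarrow> 'c \<Rightarrow> 'e list \<Rightarrow> bool" where
  "vp s t A X [] = True"
| "vp s t A X (e#P) = (e \<in> A \<and> s e = X \<and> s e \<notin> s ` set P \<and> vp s t A (t e) P)"

fun endp :: "('e \<Rightarrow> 'c) \<Rightarrow> 'c \<Rightarrow> 'e list \<Rightarrow> 'c" where
  "endp t X [] = X"
| "endp t X (e#P) = endp t (t e) P"

lemma vp_dist: "vp s t A X P \<Longrightarrow> set P \<subseteq> A \<and> distinct (map s P)"
  by (induction P arbitrary: X) auto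

lemma vp_append: "vp s t A X (P1 @ P2) \<Longrightarrow> vp s t A X P1 \<and> vp s t A (endp t X P1) P2"
  by (induction P1 arbitrary: X) auto

lemma vp_chain: "vp s t A X Q \<Longrightarrow> Suc i < length Q \<Longrightarrow> t (Q!i) = s (Q!Suc i)"
proof (induction Q arbitrary: X i)
  case Nil then show ?case by simp
next
  case (Cons e Q)
  show ?case
  proof (cases i)
    case 0 then show ?thesis using Cons.prems by (cases Q) auto
  next
    case (Suc j) then show ?thesis using Cons by auto
  qed
qed

lemma vp_endp: "vp s t A X Q \<Longrightarrow> Q \<noteq> [] \<Longrightarrow> endp t X Q = t (last Q)"
proof (induction Q arbitrary: X)
  case Nil then show ?case by simp
next
  case (Cons e Q) then show ?case by (cases Q) auto
qed

lemma vp_len: "vp s t A X P \<Longrightarrow> finite A \<Longrightarrow> length P \<le> card A"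
proof -
  assume v: "vp s t A X P" and f: "finite A"
  have d: "set P \<subseteq> A \<and> distinct (map s P)" by (rule vp_dist[OF v])
  then have "set P \<subseteq> A" "distinct P" by (auto simp: distinct_map)
  then show ?thesis using f by (metis card_mono distinct_card)
qed

definition is_cyc :: "('e \<Rightarrow> 'c) \<Rightarrow> ('e \<Rightarrow> 'c) \<Rightarrow> 'e set \<Rightarrow> 'e list \<Rightarrow> bool" where
  "is_cyc s t A Q \<longleftrightarrow> Q \<noteq> [] \<and> set Q \<subseteq> A \<and> distinct (map s Q) \<and>
     (\<forall>i<length Q. t (Q!i) = s (Q!(Suc i mod length Q)))"

lemma vp_cyc:
  assumes v: "vp s t A X Q" and ne: "Q \<noteq> []" and en: "endp t X Q = X"
  shows "is_cyc s t A Q"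
  unfolding is_cyc_def
proof (intro conjI allI impI)
  show "Q \<noteq> []" "set Q \<subseteq> A" "distinct (map s Q)" using ne vp_dist[OF v] by auto
  fix i assume i: "i < length Q"
  show "t (Q!i) = s (Q!(Suc i mod length Q))"
  proof (cases "Suc i < length Q")
    case True then show ?thesis using vp_chain[OF v] by simp
  next
    case False
    then have ii: "Suc i = length Q" using i by simp
    then have "Q!i = last Q" by (metis diff_Suc_1 last_conv_nth ne)
    moreover have "Q!(Suc i mod length Q) = hd Q" using ii ne by (simp add: hd_conv_nth)
    moreover have "s (hd Q) = X" using v ne by (cases Q) auto
    ultimately show ?thesis using vp_endp[OF v ne] en by simp
  qed
qed

lemma wt_scale: "sum_list (map (\<lambda>e. (M::int) * \<beta> e - 1) Q) = M * sum_list (map \<beta> Q) - int (length Q)"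
  by (induction Q) (auto simp: algebra_simps)

lemma diff_constraints:
  fixes \<beta> :: "'e \<Rightarrow> int"
  assumes fA: "finite A" and cyc: "\<And>Q. is_cyc s t A Q \<Longrightarrow> sum_list (map \<beta> Q) > 0"
  shows "\<exists>k::'c \<Rightarrow> real. \<forall>e\<in>A. k (s e) - k (t e) < \<beta> e"
proof -
  define N where "N = card A"
  define \<beta>' where "\<beta>' = (\<lambda>e. (int N + 1) * \<beta> e - 1)"
  define wt where "wt = (\<lambda>Q. sum_list (map \<beta>' Q))"
  define PS where "PS = (\<lambda>X. {P. vp s t A X P})"
  define d where "d = (\<lambda>X. Min (wt ` PS X))"
  have finPS: "finite (PS X)" for X
  proof (rule finite_subset)
    show "PS X \<subseteq> {xs. set xs \<subseteq> A \<and> length xs \<le> N}"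
    proof
      fix P assume "P \<in> PS X"
      then have v: "vp s t A X P" unfolding PS_def by simp
      show "P \<in> {xs. set xs \<subseteq> A \<and> length xs \<le> N}"
        using vp_dist[OF v] vp_len[OF v fA] unfolding N_def by simp
    qed
    show "finite {xs. set xs \<subseteq> A \<and> length xs \<le> N}" using finite_lists_length_le[OF fA] .
  qed
  have nePS: "[] \<in> PS X" for X unfolding PS_def by simp
  have dle: "d X \<le> wt P" if "vp s t A X P" for X P
    unfolding d_def using finPS nePS that by (simp add: PS_def)
  have dex: "\<exists>P. vp s t A X P \<and> d X = wt P" for X
  proof -
    have "d X \<in> wt ` PS X" unfolding d_def using finPS nePS by (intro Min_in) auto
    then show ?thesis unfolding PS_def by auto
  qed
  have key: "d (s e) < (int N + 1) * \<beta> e + d (t e)" if eA: "e \<in> A" for e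
  proof -
    obtain P where vP: "vp s t A (t e) P" and dP: "d (t e) = wt P" using dex by blast
    show ?thesis
    proof (cases "s e \<in> s ` set P")
      case False
      then have "vp s t A (s e) (e#P)" using eA vP by simp
      then have "d (s e) \<le> wt (e#P)" by (rule dle)
      then show ?thesis using dP unfolding wt_def \<beta>'_def by simp
    next
      case True
      then obtain f where fP: "f \<in> set P" and sf: "s f = s e" by auto
      obtain P1 P2 where P: "P = P1 @ f # P2" using split_list[OF fP] by blast
      have v1: "vp s t A (t e) P1" and v2: "vp s t A (endp t (t e) P1) (f#P2)"
        using vp_append[of s t A "t e" P1 "f#P2"] vP P by auto
      have en: "endp t (t e) P1 = s e" using v2 sf by simp
      have "distinct (map s P)" using vp_dist[OF vP] by blast
      then have nin: "s e \<notin> s ` set P1" using P sf by auto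
      have vQ: "vp s t A (s e) (e#P1)" using eA nin v1 by simp
      have cQ: "is_cyc s t A (e#P1)" using vp_cyc[OF vQ] en by simp
      have pos: "sum_list (map \<beta> (e#P1)) \<ge> 1" using cyc[OF cQ] by simp
      have len: "length (e#P1) \<le> N" using vp_len[OF vQ fA] N_def by simp
      have wQ: "wt (e#P1) = (int N + 1) * sum_list (map \<beta> (e#P1)) - int (length (e#P1))"
        unfolding wt_def \<beta>'_def by (rule wt_scale)
      have "(int N + 1) * sum_list (map \<beta> (e#P1)) \<ge> int N + 1" using pos by simp
      then have wQp: "wt (e#P1) > 0" using wQ len by linarith
      have "vp s t A (s e) (f#P2)" using v2 unfolding en .
      then have "d (s e) \<le> wt (f#P2)" by (rule dle)
      moreover have "wt P = wt P1 + wt (f#P2)" unfolding wt_def P by simp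
      moreover have "wt (e#P1) = \<beta>' e + wt P1" unfolding wt_def by simp
      ultimately show ?thesis using dP wQp unfolding \<beta>'_def by linarith
    qed
  qed
  define k where "k = (\<lambda>X. real_of_int (d X) / (real N + 1))"
  have "\<forall>e\<in>A. k (s e) - k (t e) < \<beta> e"
  proof
    fix e assume "e \<in> A"
    then have "real_of_int (d (s e)) < real_of_int ((int N + 1) * \<beta> e + d (t e))"
      using key by (simp only: of_int_less_iff)
    then have "real_of_int (d (s e)) < (real N + 1) * \<beta> e + real_of_int (d (t e))" by simp
    then have "real_of_int (d (s e)) - real_of_int (d (t e)) < (real N + 1) * \<beta> e" by simp
    then show "k (s e) - k (t e) < \<beta> e" unfolding k_def
      by (simp add: diff_divide_distrib[symmetric] divide_less_eq mult.commute)
  qed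
  then show ?thesis by blast
qed

lemma weight_step:
  fixes H :: "('n::finite \<times> 'n) set"
  assumes pc: "path_consistent H" and ab: "(a,b) \<in> H" and ba: "(b,a) \<notin> H" and ne: "a \<noteq> b"
  shows "weight H b = weight H a + 1"
proof -
  have uab: "uadj H a b" using ab unfolding uadj_def by simp
  have "comp H a = comp H b" by (rule comp_eq[OF uadj_conn[OF uab]])
  then have sab: "src H a = src H b" by (rule src_comp)
  obtain P where P: "upath H P" "hd P = src H a" "last P = a"
    using src_conn[OF pc] conn_iff_path by metis
  have Pne: "P \<noteq> []" using P upath_def by blast
  have wa: "weight H a = delta H P" using weight_path[OF pc P] .
  show ?thesis
  proof (cases "b \<in> set P")
    case False
    obtain xs where xs: "P = xs @ [a]" using Pne P by (metis append_butlast_last_id)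
    have wP: "wk H P" "distinct P" using P(1) upath_wk by blast+
    have "wk H (xs @ [a])" using wP(1) unfolding xs .
    moreover have "wk H [a,b]" using uab by simp
    ultimately have w: "wk H (xs @ a # [b])" using wk_append[of H xs a "[b]"] by blast
    have "distinct (xs @ a # [b])" using wP(2) False unfolding xs by auto
    then have up: "upath H (xs @ a # [b])" using w upath_wk by blast
    have "hd (xs @ a # [b]) = src H b" using P xs sab by (cases xs) auto
    then have "weight H b = delta H (xs @ a # [b])" using weight_path[OF pc up] by simp
    also have "\<dots> = delta H (xs@[a]) + 1" using delta_append[of H xs a "[b]"] ab by simp
    finally show ?thesis using wa xs by simp
  next
    case True
    then obtain xs ys where P2: "P = xs @ b # ys" using split_list by metis
    have "wk H (xs @ b # ys)" using P P2 upath_wk by blast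
    then have w: "wk H (xs @ [b])" "wk H (b # ys)" using wk_append[of H xs b ys] by blast+
    have dP: "distinct P" using P(1) upath_wk by blast
    have d: "distinct (xs @ [b])" "distinct (b # ys)" using dP unfolding P2 by auto
    have up1: "upath H (xs @ [b])" using w d upath_wk by blast
    have "hd (xs @ [b]) = src H b" using P P2 sab by (cases xs) auto
    then have wb: "weight H b = delta H (xs @ [b])" using weight_path[OF pc up1] by simp
    have up2: "upath H (b # ys)" using w d upath_wk by blast
    have l2: "last (b#ys) = a" using P P2 by (cases ys) auto
    have up3: "upath H [b,a]" using uab uadj_sym ne by (simp add: upath_wk)
    have "delta H (b # ys) = delta H [b,a]"
      using pc up2 up3 l2 unfolding path_consistent_def by fastforce
    also have "\<dots> = -1" using ba by simp
    finally show ?thesis using wa wb P2 delta_append[of H xs b ys] by simp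
  qed
qed

lemma sum_list_plus1: "sum_list (map (\<lambda>e. 1 + f e - g e) Q) = int (length Q) + sum_list (map (\<lambda>e. f e - g e) Q)"
  by (induction Q) auto

lemma conv_feas:
  fixes G H :: "('n::{finite,linorder} \<times> 'n) set"
  assumes dag: "dag_on G" and sub: "H \<subseteq> G" and pc: "path_consistent H" and adm: "admissible G H"
  shows "feas G H"
proof -
  let ?s = "\<lambda>e. comp H (fst e)" and ?t = "\<lambda>e. comp H (snd e)"
  let ?\<beta> = "\<lambda>e. 1 + weight H (fst e) - weight H (snd e)"
  have "\<exists>k::'n set \<Rightarrow> real. \<forall>e\<in>G-H. k (?s e) - k (?t e) < ?\<beta> e"
  proof (rule diff_constraints)
    show "finite (G - H)" by simp
    fix Q assume "is_cyc ?s ?t (G-H) Q"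
    then have "comp_cycle G H Q" unfolding is_cyc_def comp_cycle_def by simp
    then have "(\<Sum>e\<leftarrow>Q. weight H (fst e) - weight H (snd e)) > - int (length Q)"
      using adm unfolding admissible_def by blast
    then show "sum_list (map ?\<beta> Q) > 0" by (simp add: sum_list_plus1)
  qed
  then obtain k :: "'n set \<Rightarrow> real" where k: "\<forall>e\<in>G-H. k (?s e) - k (?t e) < ?\<beta> e" by blast
  define c where "c = (\<lambda>i. - real_of_int (weight H i) + k (comp H i))"
  have "\<forall>(a,b)\<in>H. c a - c b = 1"
  proof (clarify)
    fix a b assume ab: "(a,b) \<in> H"
    then have lt: "a < b" using sub dag unfolding dag_on_def by auto
    have ba: "(b,a) \<notin> H"
    proof
      assume "(b,a) \<in> H"
      then have "b < a" using sub dag unfolding dag_on_def by auto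
      then show False using lt by simp
    qed
    have "uadj H a b" using ab unfolding uadj_def by simp
    then have "comp H a = comp H b" by (rule comp_eq[OF uadj_conn])
    moreover have "weight H b = weight H a + 1" using weight_step[OF pc ab ba] lt by simp
    ultimately show "c a - c b = 1" unfolding c_def by simp
  qed
  moreover have "\<forall>(a,b)\<in>G-H. c a - c b < 1"
  proof (clarify)
    fix a b assume "(a,b) \<in> G" "(a,b) \<notin> H"
    then have "k (comp H a) - k (comp H b) < 1 + weight H a - weight H b" using k by force
    then show "c a - c b < 1" unfolding c_def by simp
  qed
  ultimately show ?thesis unfolding feas_def by blast
qed




lemma VG_image: "{axis i 1 - axis j 1 | i j. (i,j) \<in> G} = (\<lambda>(i,j). axis i (1::real) - axis j 1) ` G"
  by auto

lemma inner_edge: "(a :: real^'n) \<bullet> (axis i 1 - axis j 1) = a$i - a$j"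
  by (simp add: inner_diff_right inner_axis)

lemma zero_notin:
  fixes G H :: "('n::{finite,linorder} \<times> 'n) set"
  assumes dag: "dag_on G" and sub: "H \<subseteq> G"
  shows "0 \<notin> Q_poly H"
proof -
  define f :: "real^('n::{finite,linorder})" where "f = (\<chi> k. real (card {x. x < k}))"
  have "{axis i 1 - axis j 1 | i j. (i,j) \<in> H} \<subseteq> {x. f \<bullet> x < 0}"
  proof clarify
    fix i j assume "(i,j) \<in> H"
    then have ij: "i < j" using dag sub unfolding dag_on_def by auto
    have "{x. x < i} \<subset> {x. x < j}" using ij by auto
    then have "card {x. x < i} < card {x. x < j}" by (simp add: psubset_card_mono)
    then show "f \<bullet> (axis i 1 - axis j 1) < 0" by (simp add: inner_edge f_def)
  qed
  then have "Q_poly H \<subseteq> {x. f \<bullet> x < 0}" unfolding Q_poly_def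
    by (intro hull_minimal) (auto simp: convex_halfspace_lt)
  then show ?thesis by auto
qed

lemma extreme_notin:
  fixes G H :: "('n::{finite,linorder} \<times> 'n) set"
  assumes dag: "dag_on G" and sub: "H \<subseteq> G" and uv: "(u,v) \<in> G" "(u,v) \<notin> H"
  shows "axis u 1 - axis v 1 \<notin> Q_poly H"
proof -
  define g :: "real^('n::{finite,linorder})" where "g = axis u 1 - axis v 1"
  have uv': "u \<noteq> v" using uv dag unfolding dag_on_def by auto
  have "{axis i 1 - axis j 1 | i j. (i,j) \<in> H} \<subseteq> {x. g \<bullet> x \<le> 1}"
  proof clarify
    fix i j assume ijH: "(i,j) \<in> H"
    then have ij: "i \<noteq> j" using dag sub unfolding dag_on_def by auto
    have "(i,j) \<noteq> (u,v)" using ijH uv by auto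
    moreover have "g \<bullet> (axis i 1 - axis j 1) = g$i - g$j" by (rule inner_edge)
    ultimately show "g \<bullet> (axis i 1 - axis j 1) \<le> 1"
      using ij uv' by (auto simp: g_def axis_def)
  qed
  then have "Q_poly H \<subseteq> {x. g \<bullet> x \<le> 1}" unfolding Q_poly_def
    by (intro hull_minimal) (auto simp: convex_halfspace_le)
  moreover have "g \<bullet> (axis u 1 - axis v 1) = g$u - g$v" by (rule inner_edge)
  then have "g \<bullet> g = 2" using uv' unfolding g_def by (simp add: axis_def)
  ultimately show ?thesis unfolding g_def by force
qed

lemma feas_face:
  fixes G H :: "('n::{finite,linorder} \<times> 'n) set"
  assumes f: "feas G H" and sub: "H \<subseteq> G"
  shows "Q_poly H face_of Q_tilde G"
proof -
  obtain c :: "'n \<Rightarrow> real" where c1: "\<forall>(a,b)\<in>H. c a - c b = 1" and c2: "\<forall>(a,b)\<in>G-H. c a - c b < 1"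
    using f unfolding feas_def by blast
  define a :: "real^('n::{finite,linorder})" where "a = (\<chi> i. c i)"
  have ae: "a \<bullet> (axis i 1 - axis j 1) = c i - c j" for i j by (simp add: inner_edge a_def)
  let ?W = "insert (0::real^('n::{finite,linorder})) {axis i 1 - axis j 1 | i j. (i,j) \<in> G}"
  let ?S = "Q_tilde G"
  have Wle: "?W \<subseteq> {x. a \<bullet> x \<le> 1}"
  proof
    fix x assume x: "x \<in> ?W"
    show "x \<in> {x. a \<bullet> x \<le> 1}"
    proof (cases "x = 0")
      case True then show ?thesis by simp
    next
      case False
      then obtain i j where ij: "(i,j) \<in> G" "x = axis i 1 - axis j 1" using x by blast
      show ?thesis
      proof (cases "(i,j) \<in> H")
        case True then show ?thesis using c1 ae ij by force
      next
        case False then show ?thesis using c2 ae ij by force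
      qed
    qed
  qed
  have "?S \<subseteq> {x. a \<bullet> x \<le> 1}" unfolding Q_tilde_def
    by (rule hull_minimal[OF Wle]) (rule convex_halfspace_le)
  then have Sle: "\<And>x. x \<in> ?S \<Longrightarrow> a \<bullet> x \<le> 1" by blast
  have face: "(?S \<inter> {x. a \<bullet> x = 1}) face_of ?S"
    by (rule face_of_Int_supporting_hyperplane_le) (auto simp: Q_tilde_def Sle)
  have "Q_poly H = ?S \<inter> {x. a \<bullet> x = 1}"
  proof
    have "Q_poly H \<subseteq> ?S" unfolding Q_poly_def Q_tilde_def using sub by (intro hull_mono) blast
    moreover have "{axis i 1 - axis j 1 | i j. (i,j) \<in> H} \<subseteq> {x. a \<bullet> x = 1}"
      using c1 ae by force
    then have "Q_poly H \<subseteq> {x. a \<bullet> x = 1}" unfolding Q_poly_def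
      by (intro hull_minimal) (auto simp: convex_hyperplane)
    ultimately show "Q_poly H \<subseteq> ?S \<inter> {x. a \<bullet> x = 1}" by blast
  next
    have cW: "compact ?W" unfolding VG_image by (intro finite_imp_compact) simp
    define T where "T = ?S \<inter> {x. a \<bullet> x = 1}"
    have "T face_of Q_tilde G" using face unfolding T_def .
    then have fT: "T face_of convex hull ?W" unfolding Q_tilde_def .
    obtain S' where S': "S' \<subseteq> ?W" "T = convex hull S'"
      by (rule face_of_convex_hull_subset[OF cW fT])
    have "S' \<subseteq> {axis i 1 - axis j 1 | i j. (i,j) \<in> H}"
    proof
      fix v assume vS: "v \<in> S'"
      have "S' \<subseteq> T" unfolding S'(2) by (rule hull_subset)
      then have "v \<in> T" using vS by blast
      then have av: "a \<bullet> v = 1" unfolding T_def by blast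
      then have "v \<noteq> 0" by auto
      then obtain i j where ij: "(i,j) \<in> G" "v = axis i 1 - axis j 1" using vS S'(1) by blast
      then have "(i,j) \<in> H" using c2 av ae by force
      then show "v \<in> {axis i 1 - axis j 1 | i j. (i,j) \<in> H}" using ij by blast
    qed
    then have "convex hull S' \<subseteq> Q_poly H" unfolding Q_poly_def by (rule hull_mono)
    then show "?S \<inter> {x. a \<bullet> x = 1} \<subseteq> Q_poly H" using S'(2) unfolding T_def by simp
  qed
  then show ?thesis using face by simp
qed

lemma face_feas:
  fixes G H :: "('n::{finite,linorder} \<times> 'n) set"
  assumes dag: "dag_on G" and sub: "H \<subseteq> G" and fc: "Q_poly H face_of Q_tilde G"
  shows "feas G H"
proof (cases "H = {}")
  case True
  then show ?thesis unfolding feas_def by (intro exI[of _ "\<lambda>_. 0"]) simp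
next
  case False
  let ?W = "insert (0::real^('n::{finite,linorder})) {axis i 1 - axis j 1 | i j. (i,j) \<in> G}"
  have "polyhedron (Q_tilde G)" unfolding Q_tilde_def VG_image
    by (intro polytope_imp_polyhedron polytope_convex_hull) simp
  then have "Q_poly H exposed_face_of Q_tilde G" using fc exposed_face_of_polyhedron by blast
  then obtain a b where ab: "Q_tilde G \<subseteq> {x. a \<bullet> x \<le> b}" "Q_poly H = Q_tilde G \<inter> {x. a \<bullet> x = b}"
    unfolding exposed_face_of_def by blast
  have z: "0 \<in> Q_tilde G" unfolding Q_tilde_def by (simp add: hull_inc)
  have "0 \<notin> Q_poly H" using zero_notin[OF dag sub] .
  then have b: "b > 0" using z ab by force
  have ae: "a \<bullet> (axis i 1 - axis j 1) = a$i - a$j" for i j by (rule inner_edge)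
  have inS: "axis i 1 - axis j 1 \<in> Q_tilde G" if "(i,j) \<in> G" for i j
    unfolding Q_tilde_def using that by (intro hull_inc) blast
  define c where "c = (\<lambda>i. a$i / b)"
  have "\<forall>(i,j)\<in>H. c i - c j = 1"
  proof clarify
    fix i j assume "(i,j) \<in> H"
    then have "axis i 1 - axis j 1 \<in> Q_poly H" unfolding Q_poly_def by (intro hull_inc) blast
    then have "a$i - a$j = b" using ab ae by force
    then show "c i - c j = 1" using b unfolding c_def by (simp add: diff_divide_distrib[symmetric])
  qed
  moreover have "\<forall>(i,j)\<in>G-H. c i - c j < 1"
  proof clarify
    fix i j assume ij: "(i,j) \<in> G" "(i,j) \<notin> H"
    have "a$i - a$j \<le> b" using ab(1) inS[OF ij(1)] ae by force
    moreover have "a$i - a$j \<noteq> b" using extreme_notin[OF dag sub ij] ab(2) inS[OF ij(1)] ae by force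
    ultimately have "a$i - a$j < b" by simp
    then show "c i - c j < 1" using b unfolding c_def by (simp add: diff_divide_distrib[symmetric])
  qed
  ultimately show ?thesis unfolding feas_def by blast
qed

theorem mainTheorem9:
  fixes G H :: "('n::{finite,linorder} \<times> 'n) set"
  assumes "dag_on G" and "H \<subseteq> G"
  shows "Q_poly H face_of Q_tilde G \<longleftrightarrow> path_consistent H \<and> admissible G H"
  using face_feas[OF assms] feas_face[OF _ assms(2)] feas_pc feas_adm conv_feas[OF assms] by blast


end
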